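(* Let $S$ be a numerical semigroup with multiplicity $e$ and blowup $B$. If ${\rm adj}(S)=\operatorname{Ap}(B;e)$, then ${\rm d}_{\max}(S)=\max\{d(f;B^{\mathcal D}): f\in\operatorname{maxAp}(B;e)\}$.
   Context: $S$ is a numerical semigroup (a submonoid of $\mathbb N$ with finite complement) with minimal generators $e<a_1<\dots<a_t$. An $S$-factorization of $n$ is $(c_0,\dots,c_t)\in\mathbb N^{t+1}$ with $c_0e+\sum c_ia_i=n$, of length $\sum c_i$. ${\rm ord}(n;S)$ is the maximal such length, ${\rm d}_{\max}(n;S)$ is the number of factorizations of maximal length, and ${\rm d}_{\max}(S)=\max_{n\in S}{\rm d}_{\max}(n;S)$. ${\rm adj}(S)=\{s-{\rm ord}(s;S)e:s\in S\}$. The blowup is $B=\langle e,d_1,\dots,d_t\rangle$ with $d_i=a_i-e$, and $\mathcal D=(e,d_1,\dots,d_t)$. $d(b;B^{\mathcal D})$ is the number of tuples $(x_0,\dots,x_t)\in\mathbb N^{t+1}$ with $x_0e+\sum x_id_i=b$. $\operatorname{Ap}(B;e)=\{w\in B:w-e\notin B\}$, and $\operatorname{maxAp}(B;e)$ is the set of elements of $\operatorname{Ap}(B;e)\setminus\{0\}$ that are maximal with respect to the partial order $w\preceq w'$ iff $w'-w\in B$. *)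

theory Defs
  imports Main
begin

definition numerical_semigroup :: "nat set \<Rightarrow> bool" where
  "numerical_semigroup S \<longleftrightarrow> 0 \<in> S \<and> (\<forall>x\<in>S. \<forall>y\<in>S. x + y \<in> S) \<and> finite (UNIV - S)"

definition mingens :: "nat set \<Rightarrow> nat set" where
  "mingens S = {a \<in> S. a \<noteq> 0 \<and> \<not> (\<exists>x\<in>S. \<exists>y\<in>S. x \<noteq> 0 \<and> y \<noteq> 0 \<and> a = x + y)}"

definition multiplicity_ns :: "nat set \<Rightarrow> nat" where
  "multiplicity_ns S = (LEAST n. n \<in> S \<and> n \<noteq> 0)"

text \<open>Representations of b as a nonnegative combination of weights w a, a ranging over the
  finite index set A (tuples indexed by A, zero outside A).\<close>
definition reps :: "nat set \<Rightarrow> (nat \<Rightarrow> nat) \<Rightarrow> nat \<Rightarrow> (nat \<Rightarrow> nat) set" where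
  "reps A w b = {x. (\<forall>a. a \<notin> A \<longrightarrow> x a = 0) \<and> (\<Sum>a\<in>A. x a * w a) = b}"

definition factorizations :: "nat set \<Rightarrow> nat \<Rightarrow> (nat \<Rightarrow> nat) set" where
  "factorizations S n = reps (mingens S) id n"

definition fact_length :: "nat set \<Rightarrow> (nat \<Rightarrow> nat) \<Rightarrow> nat" where
  "fact_length S c = (\<Sum>a\<in>mingens S. c a)"

definition ord_ns :: "nat set \<Rightarrow> nat \<Rightarrow> nat" where
  "ord_ns S n = Max (fact_length S ` factorizations S n)"

definition dmax_elem :: "nat set \<Rightarrow> nat \<Rightarrow> nat" where
  "dmax_elem S n = card {c \<in> factorizations S n. fact_length S c = ord_ns S n}"

definition dmax_ns :: "nat set \<Rightarrow> nat" where
  "dmax_ns S = Max (dmax_elem S ` S)"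

definition adj :: "nat set \<Rightarrow> nat set" where
  "adj S = {s - ord_ns S s * multiplicity_ns S | s. s \<in> S}"

definition blowup_weight :: "nat set \<Rightarrow> nat \<Rightarrow> nat" where
  "blowup_weight S a = (if a = multiplicity_ns S then a else a - multiplicity_ns S)"

text \<open>d(b; B^D): number of tuples (x_0,...,x_t) with x_0 e + sum x_i d_i = b.\<close>
definition dD :: "nat set \<Rightarrow> nat \<Rightarrow> nat" where
  "dD S b = card (reps (mingens S) (blowup_weight S) b)"

definition blowup :: "nat set \<Rightarrow> nat set" where
  "blowup S = {b. reps (mingens S) (blowup_weight S) b \<noteq> {}}"

text \<open>Apery set Ap(B;m) = {w in B. w - m not in B} (w - m taken in the integers).\<close>
definition apery :: "nat set \<Rightarrow> nat \<Rightarrow> nat set" where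
  "apery B m = {w \<in> B. \<not> (m \<le> w \<and> w - m \<in> B)}"

definition preceq :: "nat set \<Rightarrow> nat \<Rightarrow> nat \<Rightarrow> bool" where
  "preceq B w w' \<longleftrightarrow> w \<le> w' \<and> w' - w \<in> B"

definition maxAp :: "nat set \<Rightarrow> nat \<Rightarrow> nat set" where
  "maxAp B m = {w \<in> apery B m - {0}. \<forall>w' \<in> apery B m - {0}. preceq B w w' \<longrightarrow> w' = w}"

end

theory Submission
  imports Defs
begin

lemma reps_finite:
  assumes "finite A" "\<And>a. a \<in> A \<Longrightarrow> w a > 0"
  shows "finite (reps A w b)"
proof -
  have "reps A w b \<subseteq> {f. \<forall>x. (x \<in> A \<longrightarrow> f x \<in> {..b}) \<and> (x \<notin> A \<longrightarrow> f x = 0)}"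
  proof
    fix x assume x: "x \<in> reps A w b"
    have "x a \<le> b" if "a \<in> A" for a
    proof -
      have "x a \<le> x a * w a" using assms(2)[OF that] by simp
      also have "\<dots> \<le> (\<Sum>a\<in>A. x a * w a)"
        using assms(1) that by (intro member_le_sum) auto
      finally show ?thesis using x by (simp add: reps_def)
    qed
    then show "x \<in> {f. \<forall>x. (x \<in> A \<longrightarrow> f x \<in> {..b}) \<and> (x \<notin> A \<longrightarrow> f x = 0)}"
      using x by (auto simp: reps_def)
  qed
  moreover have "finite {f. \<forall>x. (x \<in> A \<longrightarrow> f x \<in> {..b}) \<and> (x \<notin> A \<longrightarrow> f x = (0::nat))}"
    using assms(1) by (intro finite_set_of_finite_funs) auto
  ultimately show ?thesis by (rule finite_subset)
qed

lemma reps_add: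
  assumes "x \<in> reps A w b" "y \<in> reps A w c"
  shows "(\<lambda>a. x a + y a) \<in> reps A w (b + c)"
  using assms by (auto simp: reps_def algebra_simps sum.distrib)

locale nsg =
  fixes S :: "nat set"
  assumes ns: "numerical_semigroup S" and nU: "S \<noteq> UNIV"
begin

abbreviation "e \<equiv> multiplicity_ns S"
abbreviation "G \<equiv> mingens S"
abbreviation "w \<equiv> blowup_weight S"
abbreviation "B \<equiv> blowup S"

lemma zero_in: "0 \<in> S" and add_closed: "x \<in> S \<Longrightarrow> y \<in> S \<Longrightarrow> x + y \<in> S"
  using ns by (auto simp: numerical_semigroup_def)

lemma cofin: "\<exists>F. \<forall>x>F. x \<in> S"
proof -
  have "finite (UNIV - S)" using ns by (simp add: numerical_semigroup_def)
  then obtain F where "\<forall>n\<in>UNIV - S. n \<le> F" using finite_nat_set_iff_bounded_le by blast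
  then show ?thesis by (metis DiffI UNIV_I not_le)
qed

lemma e_props: "e \<in> S" "e \<noteq> 0" "\<And>x. x \<in> S \<Longrightarrow> x \<noteq> 0 \<Longrightarrow> e \<le> x"
proof -
  obtain F where F: "\<forall>x>F. x \<in> S" using cofin by blast
  have ex: "Suc F \<in> S \<and> Suc F \<noteq> 0" using F by auto
  show "e \<in> S" "e \<noteq> 0" using LeastI[of "\<lambda>n. n \<in> S \<and> n \<noteq> 0", OF ex]
    by (auto simp: multiplicity_ns_def)
  show "\<And>x. x \<in> S \<Longrightarrow> x \<noteq> 0 \<Longrightarrow> e \<le> x"
    unfolding multiplicity_ns_def by (rule Least_le) simp
qed

lemma e_ge2: "e \<ge> 2"
proof (rule ccontr)
  assume "\<not> e \<ge> 2"
  then have e1: "e = 1" using e_props(2) by auto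
  have "n \<in> S" for n
  proof (induction n)
    case 0 show ?case by (rule zero_in)
  next
    case (Suc n)
    have "1 \<in> S" using e_props(1) e1 by simp
    from add_closed[OF Suc this] show ?case by simp
  qed
  then show False using nU by auto
qed

lemma G_props: "a \<in> G \<Longrightarrow> a \<in> S \<and> a \<noteq> 0 \<and> e \<le> a"
  using e_props by (auto simp: mingens_def)

lemma e_in_G: "e \<in> G"
proof -
  have "\<not> (x \<in> S \<and> y \<in> S \<and> x \<noteq> 0 \<and> y \<noteq> 0 \<and> e = x + y)" for x y
    using e_props(3)[of x] e_props(3)[of y] by auto
  then show ?thesis using e_props by (auto simp: mingens_def)
qed

lemma G_finite: "finite G"
proof -
  obtain F where F: "\<forall>x>F. x \<in> S" using cofin by blast
  have "G \<subseteq> {..F + e}"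
  proof
    fix a assume a: "a \<in> G"
    show "a \<in> {..F + e}"
    proof (rule ccontr)
      assume "a \<notin> {..F + e}"
      then have "e \<in> S \<and> a - e \<in> S \<and> e \<noteq> 0 \<and> a - e \<noteq> 0 \<and> a = e + (a - e)"
        using F e_props by auto
      then show False using a unfolding mingens_def by blast
    qed
  qed
  then show ?thesis using finite_subset by blast
qed

lemma w_pos: "a \<in> G \<Longrightarrow> w a > 0"
  using G_props[of a] by (auto simp: blowup_weight_def)

lemma reps_w_finite: "finite (reps G w b)"
  using reps_finite G_finite w_pos by blast

lemma fact_finite: "finite (factorizations S n)"
  unfolding factorizations_def using reps_finite[OF G_finite] G_props by auto


lemma sum_in_S: "finite A \<Longrightarrow> (\<forall>a\<in>A. f a \<in> S) \<Longrightarrow> sum f A \<in> S"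
  by (induction A rule: finite_induct) (auto intro: zero_in add_closed)

lemma mult_in_S: "a \<in> S \<Longrightarrow> k * a \<in> S"
  by (induction k) (auto intro: zero_in add_closed)

lemma sum_split_e:
  "(\<Sum>a\<in>G. x a * a) = (\<Sum>a\<in>G. x a * (a - e)) + (\<Sum>a\<in>G. x a) * e"
proof -
  have "(\<Sum>a\<in>G. x a * a) = (\<Sum>a\<in>G. x a * (a - e) + x a * e)"
  proof (rule sum.cong)
    fix a assume "a \<in> G"
    then have "a = (a - e) + e" using G_props by auto
    then show "x a * a = x a * (a - e) + x a * e" by (metis distrib_left)
  qed simp
  also have "\<dots> = (\<Sum>a\<in>G. x a * (a - e)) + (\<Sum>a\<in>G. x a) * e"
    by (simp add: sum.distrib sum_distrib_right)
  finally show ?thesis .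
qed

lemma wsum_e0: "x e = 0 \<Longrightarrow> (\<Sum>a\<in>G. x a * w a) = (\<Sum>a\<in>G. x a * (a - e))"
  by (rule sum.cong) (auto simp: blowup_weight_def)

lemma sum_upd_e: "(\<Sum>a\<in>G. (x(e := 0)) a * (a - e)) = (\<Sum>a\<in>G. x a * (a - e))"
  by (rule sum.cong) auto

lemma sum_remove_e: "(\<Sum>a\<in>G. f a) = f e + (\<Sum>a\<in>G - {e}. f a)"
  using sum.remove[OF G_finite e_in_G] by simp

lemma fact_to_rep:
  assumes "c \<in> factorizations S n"
  shows "c(e := 0) \<in> reps G w (n - fact_length S c * e) \<and> fact_length S c * e \<le> n"
proof -
  have supp: "\<forall>a. a \<notin> G \<longrightarrow> c a = 0" and n: "(\<Sum>a\<in>G. c a * a) = n"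
    using assms by (auto simp: factorizations_def reps_def)
  have n2: "n = (\<Sum>a\<in>G. c a * (a - e)) + fact_length S c * e"
    using n sum_split_e[of c] by (simp add: fact_length_def)
  have "(\<Sum>a\<in>G. (c(e := 0)) a * w a) = (\<Sum>a\<in>G. c a * (a - e))"
    using wsum_e0[of "c(e:=0)"] sum_upd_e[of c] by simp
  then show ?thesis using supp n2 e_in_G by (auto simp: reps_def)
qed

lemma in_S_of_fact: "c \<in> factorizations S n \<Longrightarrow> n \<in> S"
proof -
  assume "c \<in> factorizations S n"
  then have "n = (\<Sum>a\<in>G. c a * a)" by (auto simp: factorizations_def reps_def)
  moreover have "(\<Sum>a\<in>G. c a * a) \<in> S"
    using G_finite G_props mult_in_S by (intro sum_in_S) auto
  ultimately show "n \<in> S" by simp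
qed

lemma fact_exists: "n \<in> S \<Longrightarrow> factorizations S n \<noteq> {}"
proof (induction n rule: less_induct)
  case (less n)
  show ?case
  proof (cases "n = 0")
    case True
    then have "(\<lambda>_. 0) \<in> factorizations S n" by (auto simp: factorizations_def reps_def)
    then show ?thesis by blast
  next
    case n0: False
    show ?thesis
    proof (cases "n \<in> G")
      case True
      have "(\<Sum>a\<in>G. (if a = n then 1 else 0) * id a) = (\<Sum>a\<in>G. if a = n then n else 0)"
        by (rule sum.cong) auto
      also have "\<dots> = n" using True G_finite by simp
      finally have "(\<lambda>a. if a = n then 1 else 0) \<in> factorizations S n"
        using True by (auto simp: factorizations_def reps_def)
      then show ?thesis by blast
    next
      case False
      then obtain x y where xy: "x \<in> S" "y \<in> S" "x \<noteq> 0" "y \<noteq> 0" "n = x + y"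
        using less.prems n0 by (auto simp: mingens_def)
      then obtain c1 c2 where "c1 \<in> factorizations S x" "c2 \<in> factorizations S y"
        using less.IH[of x] less.IH[of y] by fastforce
      then have "(\<lambda>a. c1 a + c2 a) \<in> factorizations S n"
        using reps_add xy(5) by (auto simp: factorizations_def)
      then show ?thesis by blast
    qed
  qed
qed

lemma ord_props:
  assumes "n \<in> S"
  shows "\<exists>c\<in>factorizations S n. fact_length S c = ord_ns S n"
    "\<And>c. c \<in> factorizations S n \<Longrightarrow> fact_length S c \<le> ord_ns S n"
proof -
  have fin: "finite (fact_length S ` factorizations S n)" using fact_finite by simp
  have ne: "fact_length S ` factorizations S n \<noteq> {}" using fact_exists[OF assms] by simp
  show "\<exists>c\<in>factorizations S n. fact_length S c = ord_ns S n"
    using Max_in[OF fin ne] unfolding ord_ns_def by auto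
  show "\<And>c. c \<in> factorizations S n \<Longrightarrow> fact_length S c \<le> ord_ns S n"
    using Max_ge[OF fin] unfolding ord_ns_def by auto
qed

lemma dmax_le:
  assumes "n \<in> S"
  shows "dmax_elem S n \<le> dD S (n - ord_ns S n * e)"
proof -
  let ?M = "{c \<in> factorizations S n. fact_length S c = ord_ns S n}"
  have "inj_on (\<lambda>c. c(e := 0)) ?M"
  proof (rule inj_onI)
    fix c c' assume c: "c \<in> ?M" and c': "c' \<in> ?M" and eq: "c(e := 0) = c'(e := 0)"
    have ne: "a \<noteq> e \<Longrightarrow> c a = c' a" for a using fun_cong[OF eq, of a] by auto
    have "(\<Sum>a\<in>G - {e}. c a) = (\<Sum>a\<in>G - {e}. c' a)" by (rule sum.cong) (auto simp: ne)
    moreover have "fact_length S c = fact_length S c'" using c c' by simp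
    ultimately have "c e = c' e" using sum_remove_e[of c] sum_remove_e[of c']
      by (simp add: fact_length_def)
    then show "c = c'" using ne by (metis ext)
  qed
  moreover have "(\<lambda>c. c(e := 0)) ` ?M \<subseteq> reps G w (n - ord_ns S n * e)"
  proof (rule image_subsetI)
    fix c assume "c \<in> ?M"
    then show "c(e := 0) \<in> reps G w (n - ord_ns S n * e)" using fact_to_rep[of c n] by auto
  qed
  ultimately show ?thesis unfolding dmax_elem_def dD_def
    by (rule card_inj_on_le[OF _ _ reps_w_finite])
qed

lemma zero_rep: "(\<lambda>_. 0) \<in> reps G w 0" by (auto simp: reps_def)

lemma B_add: "x \<in> B \<Longrightarrow> y \<in> B \<Longrightarrow> x + y \<in> B"
  unfolding blowup_def using reps_add by blast

lemma zero_B: "0 \<in> B" unfolding blowup_def using zero_rep by blast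

lemma e_B: "e \<in> B"
proof -
  have "(\<Sum>a\<in>G. (if a = e then 1 else 0) * w a) = (\<Sum>a\<in>G. if a = e then e else 0)"
    by (rule sum.cong) (auto simp: blowup_weight_def)
  also have "\<dots> = e" using e_in_G G_finite by simp
  finally have "(\<lambda>a. if a = e then 1 else 0) \<in> reps G w e"
    using e_in_G by (auto simp: reps_def)
  then show ?thesis unfolding blowup_def by blast
qed

lemma mult_e_B: "k * e \<in> B"
  by (induction k) (auto intro: zero_B B_add e_B)

lemma apery_rep_e0:
  assumes "v \<in> apery B e" "x \<in> reps G w v"
  shows "x e = 0"
proof (rule ccontr)
  assume x0: "x e \<noteq> 0"
  let ?x = "x(e := x e - 1)"
  have we: "w e = e" by (simp add: blowup_weight_def)
  have v: "v = x e * e + (\<Sum>a\<in>G - {e}. x a * w a)"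
    using assms(2) sum_remove_e[of "\<lambda>a. x a * w a"] we by (simp add: reps_def)
  have "(\<Sum>a\<in>G. ?x a * w a) = (x e - 1) * e + (\<Sum>a\<in>G - {e}. ?x a * w a)"
    using sum_remove_e[of "\<lambda>a. ?x a * w a"] we by simp
  also have "(\<Sum>a\<in>G - {e}. ?x a * w a) = (\<Sum>a\<in>G - {e}. x a * w a)"
    by (rule sum.cong) auto
  finally have s: "(\<Sum>a\<in>G. ?x a * w a) = (x e - 1) * e + (\<Sum>a\<in>G - {e}. x a * w a)" .
  have xe: "x e * e = (x e - 1) * e + e" using x0
    by (metis Suc_diff_1 add.commute mult_Suc not_gr_zero)
  have "?x \<in> reps G w (v - e)" using assms(2) s v xe e_in_G by (auto simp: reps_def)
  then have "v - e \<in> B" unfolding blowup_def by blast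
  moreover have "e \<le> v" using v xe by simp
  ultimately show False using assms(1) by (simp add: apery_def)
qed

lemma apery_finite: "finite (apery B e)"
proof -
  have "inj_on (\<lambda>v. v mod e) (apery B e)"
  proof -
    have key: "v = v'" if v: "v \<in> apery B e" and v': "v' \<in> apery B e"
      and m: "v mod e = v' mod e" and le: "v \<le> v'" for v v'
    proof (rule ccontr)
      assume ne: "v \<noteq> v'"
      have "e dvd v' - v" using mod_eq_dvd_iff_nat[OF le] m[symmetric] by simp
      then obtain j where j: "v' - v = e * j" by (auto elim: dvdE)
      have "j \<noteq> 0"
      proof
        assume "j = 0"
        with j have "v' - v = 0" by simp
        with le ne show False by simp
      qed
      then obtain i where i: "j = Suc i" using not0_implies_Suc by blast
      have "v' = v + e + i * e" using j i le by (simp add: algebra_simps)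
      then have "v' - e = v + i * e" "e \<le> v'" by auto
      moreover have "v + i * e \<in> B" using v mult_e_B B_add by (simp add: apery_def)
      ultimately show False using v' by (simp add: apery_def)
    qed
    show ?thesis
      by (rule inj_onI) (metis key nat_le_linear)
  qed
  moreover have "(\<lambda>v. v mod e) ` apery B e \<subseteq> {..<e}" using e_props(2) by auto
  ultimately show ?thesis by (metis finite_lessThan finite_imageD finite_subset)
qed

lemma dD_mono:
  assumes "preceq B b f"
  shows "dD S b \<le> dD S f"
proof -
  obtain y where y: "y \<in> reps G w (f - b)" using assms by (auto simp: preceq_def blowup_def)
  have "inj_on (\<lambda>x a. x a + y a) (reps G w b)"
    by (rule inj_onI) (metis add_right_cancel ext)
  moreover have "(\<lambda>x a. x a + y a) ` reps G w b \<subseteq> reps G w f"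
  proof (rule image_subsetI)
    fix x assume "x \<in> reps G w b"
    from reps_add[OF this y] show "(\<lambda>a. x a + y a) \<in> reps G w f"
      using assms by (simp add: preceq_def)
  qed
  ultimately show ?thesis unfolding dD_def
    by (rule card_inj_on_le[OF _ _ reps_w_finite])
qed

lemma exists_maxAp:
  assumes "v \<in> apery B e - {0}"
  shows "\<exists>f\<in>maxAp B e. preceq B v f"
proof -
  let ?U = "{u \<in> apery B e - {0}. preceq B v u}"
  have fin: "finite ?U" using apery_finite by auto
  have "preceq B v v" using zero_B by (simp add: preceq_def)
  then have ne: "?U \<noteq> {}" using assms by blast
  define f where "f = Max ?U"
  have fU: "f \<in> ?U" unfolding f_def using Max_in[OF fin ne] .
  have "f \<in> maxAp B e"
    unfolding maxAp_def
  proof (intro CollectI conjI ballI impI)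
    show "f \<in> apery B e - {0}" using fU by simp
    fix u assume u: "u \<in> apery B e - {0}" and fu: "preceq B f u"
    have h: "u - f \<in> B" "f - v \<in> B" "v \<le> f" "f \<le> u" using fu fU by (auto simp: preceq_def)
    then have "u - v = (u - f) + (f - v)" by simp
    moreover have "u - f + (f - v) \<in> B" using B_add[OF h(1) h(2)] .
    ultimately have "preceq B v u" using h by (auto simp: preceq_def)
    then have "u \<le> f" unfolding f_def using u fin by (intro Max_ge) auto
    then show "u = f" using fu by (simp add: preceq_def)
  qed
  then show ?thesis using fU by blast
qed

lemma dD_le_dmax:
  assumes f: "f \<in> apery B e"
  shows "\<exists>m\<in>S. dD S f \<le> dmax_elem S m"
proof -
  let ?R = "reps G w f"
  have finR: "finite ?R" by (rule reps_w_finite)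
  have neR: "?R \<noteq> {}" using f by (auto simp: apery_def blowup_def)
  define K where "K = Max ((\<lambda>x. sum x G) ` ?R)"
  define m where "m = f + K * e"
  define \<psi> where "\<psi> x = x(e := K - sum x G)" for x :: "nat \<Rightarrow> nat"
  have psi: "\<psi> x \<in> factorizations S m \<and> fact_length S (\<psi> x) = K" if x: "x \<in> ?R" for x
  proof -
    have xe: "x e = 0" using apery_rep_e0[OF f x] .
    have sK: "sum x G \<le> K" unfolding K_def using x finR by (intro Max_ge) auto
    have supp: "\<forall>a. a \<notin> G \<longrightarrow> x a = 0" and fx: "(\<Sum>a\<in>G. x a * w a) = f"
      using x by (auto simp: reps_def)
    have s1: "sum x G = (\<Sum>a\<in>G - {e}. x a)" using sum_remove_e[of x] xe by simp
    have "sum (\<psi> x) G = (K - sum x G) + (\<Sum>a\<in>G - {e}. \<psi> x a)"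
      using sum_remove_e[of "\<psi> x"] by (simp add: \<psi>_def)
    also have "(\<Sum>a\<in>G - {e}. \<psi> x a) = (\<Sum>a\<in>G - {e}. x a)"
      by (rule sum.cong) (auto simp: \<psi>_def)
    finally have len: "sum (\<psi> x) G = K" using s1 sK by simp
    have "(\<Sum>a\<in>G. \<psi> x a * (a - e)) = (\<Sum>a\<in>G. x a * (a - e))"
      by (rule sum.cong) (auto simp: \<psi>_def)
    also have "\<dots> = f" using wsum_e0[of x, OF xe] fx by simp
    finally have "(\<Sum>a\<in>G. \<psi> x a * a) = m"
      using sum_split_e[of "\<psi> x"] len by (simp add: m_def)
    then show ?thesis using supp len e_in_G
      by (auto simp: factorizations_def reps_def fact_length_def \<psi>_def)
  qed
  obtain x0 where x0: "x0 \<in> ?R" using neR by blast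
  have mS: "m \<in> S" using psi[OF x0] in_S_of_fact by blast
  have ordK: "ord_ns S m = K"
  proof -
    have "K \<le> ord_ns S m" using psi[OF x0] ord_props(2)[OF mS] by metis
    moreover obtain c where c: "c \<in> factorizations S m" "fact_length S c = ord_ns S m"
      using ord_props(1)[OF mS] by blast
    have "ord_ns S m \<le> K"
    proof (rule ccontr)
      assume "\<not> ord_ns S m \<le> K"
      then obtain j where j: "ord_ns S m = K + 1 + j" by (metis add.assoc le_add_diff_inverse not_le Suc_le_eq Suc_eq_plus1)
      have r: "c(e := 0) \<in> reps G w (m - ord_ns S m * e)" "ord_ns S m * e \<le> m"
        using fact_to_rep[OF c(1)] c(2) by auto
      have eq1: "ord_ns S m * e = K * e + e + j * e" using j by (simp add: algebra_simps)
      have le1: "e + j * e \<le> f" using r(2) eq1 by (simp add: m_def)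
      have "m - ord_ns S m * e = f - e - j * e" using eq1 by (simp add: m_def)
      then have "f - e - j * e \<in> B" using r(1) unfolding blowup_def by auto
      then have "f - e - j * e + j * e \<in> B" using mult_e_B B_add by blast
      moreover have "f - e - j * e + j * e = f - e" using le1 by simp
      ultimately have "f - e \<in> B" by simp
      then show False using f le1 by (simp add: apery_def)
    qed
    ultimately show ?thesis by simp
  qed
  have "inj_on \<psi> ?R"
  proof (rule inj_onI)
    fix x y assume x: "x \<in> ?R" and y: "y \<in> ?R" and eq: "\<psi> x = \<psi> y"
    have "x = (\<psi> x)(e := 0)" using apery_rep_e0[OF f x] by (auto simp: \<psi>_def)
    also have "\<dots> = (\<psi> y)(e := 0)" using eq by simp
    also have "\<dots> = y" using apery_rep_e0[OF f y] by (auto simp: \<psi>_def)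
    finally show "x = y" .
  qed
  moreover have "\<psi> ` ?R \<subseteq> {c \<in> factorizations S m. fact_length S c = ord_ns S m}"
    using psi ordK by auto
  moreover have "finite {c \<in> factorizations S m. fact_length S c = ord_ns S m}"
    using fact_finite by simp
  ultimately have "card ?R \<le> dmax_elem S m" unfolding dmax_elem_def
    by (rule card_inj_on_le)
  then show ?thesis using mS unfolding dD_def by blast
qed


lemma main:
  assumes hyp: "adj S = apery B e"
  shows "finite (dmax_elem S ` S) \<and> dmax_ns S = Max (dD S ` maxAp B e)"
proof -
  have adjAp: "n \<in> S \<Longrightarrow> n - ord_ns S n * e \<in> apery B e" for n
    using hyp by (auto simp: adj_def)
  have ordle: "n \<in> S \<Longrightarrow> ord_ns S n * e \<le> n" for n
    using ord_props(1) fact_to_rep by metis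
  obtain F where F: "\<forall>x>F. x \<in> S" using cofin by blast
  define n0 where "n0 = (F + 1) * e + 1"
  have h1: "F \<le> F * e" using e_props(2) by simp
  have h2: "n0 = F * e + e + 1" by (simp add: n0_def algebra_simps)
  have "F < n0" using h1 h2 by linarith
  then have n0S: "n0 \<in> S" using F by blast
  define b0 where "b0 = n0 - ord_ns S n0 * e"
  have b0Ap: "b0 \<in> apery B e" using adjAp[OF n0S] by (simp add: b0_def)
  have "n0 = b0 + ord_ns S n0 * e" using ordle[OF n0S] by (simp add: b0_def)
  then have "b0 mod e = n0 mod e" by (metis mod_mult_self1)
  also have "n0 mod e = 1"
  proof -
    have "n0 = 1 + (F + 1) * e" by (simp add: n0_def)
    then have "n0 mod e = 1 mod e" by (metis mod_mult_self1)
    then show ?thesis using e_ge2 by simp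
  qed
  finally have b0m: "b0 mod e = 1" .
  have b0nz: "b0 \<noteq> 0"
  proof
    assume "b0 = 0"
    then show False using b0m by simp
  qed
  have finM: "finite (maxAp B e)"
    using apery_finite by (rule finite_subset[rotated]) (auto simp: maxAp_def)
  have above: "\<exists>f\<in>maxAp B e. dD S b \<le> dD S f" if b: "b \<in> apery B e" for b
  proof -
    obtain v where v: "v \<in> apery B e - {0}" "preceq B b v"
    proof (cases "b = 0")
      case True
      have "preceq B b b0" using True b0Ap by (simp add: preceq_def apery_def)
      then show ?thesis using that b0Ap b0nz by blast
    next
      case False
      have "preceq B b b" using zero_B by (simp add: preceq_def)
      then show ?thesis using that b False by blast
    qed
    obtain f where f: "f \<in> maxAp B e" "preceq B v f" using exists_maxAp[OF v(1)] by blast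
    have h: "v - b \<in> B" "f - v \<in> B" "b \<le> v" "v \<le> f" using v(2) f(2) by (auto simp: preceq_def)
    then have "f - b = (f - v) + (v - b)" by simp
    moreover have "(f - v) + (v - b) \<in> B" using B_add[OF h(2) h(1)] .
    ultimately have "preceq B b f" using h by (auto simp: preceq_def)
    then show ?thesis using dD_mono f(1) by blast
  qed
  obtain f0 where "f0 \<in> maxAp B e" using above[OF b0Ap] by blast
  then have neW: "dD S ` maxAp B e \<noteq> {}" by blast
  have finW: "finite (dD S ` maxAp B e)" using finM by simp
  have Vle: "dmax_elem S n \<le> Max (dD S ` maxAp B e)" if nS: "n \<in> S" for n
  proof -
    obtain f where f: "f \<in> maxAp B e" "dD S (n - ord_ns S n * e) \<le> dD S f"
      using above[OF adjAp[OF nS]] by blast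
    have "dD S f \<le> Max (dD S ` maxAp B e)" using f(1) finW by simp
    then show ?thesis using dmax_le[OF nS] f(2) by linarith
  qed
  have finV: "finite (dmax_elem S ` S)"
    by (rule finite_subset[of _ "{..Max (dD S ` maxAp B e)}"]) (use Vle in auto)
  have neV: "dmax_elem S ` S \<noteq> {}" using zero_in by blast
  have le1: "Max (dmax_elem S ` S) \<le> Max (dD S ` maxAp B e)"
    using Vle finV neV by (simp add: Max_le_iff)
  have le2: "Max (dD S ` maxAp B e) \<le> Max (dmax_elem S ` S)"
  proof -
    have "dD S f \<le> Max (dmax_elem S ` S)" if "f \<in> maxAp B e" for f
    proof -
      have "f \<in> apery B e" using that by (simp add: maxAp_def)
      then obtain m where "m \<in> S" "dD S f \<le> dmax_elem S m" using dD_le_dmax by blast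
      moreover have "dmax_elem S m \<le> Max (dmax_elem S ` S)" using \<open>m \<in> S\<close> finV by simp
      ultimately show ?thesis by linarith
    qed
    then show ?thesis using finW neW by (simp add: Max_le_iff)
  qed
  show ?thesis using finV le1 le2 by (simp add: dmax_ns_def)
qed

end

theorem proposition4p2:
  fixes S :: "nat set"
  assumes "numerical_semigroup S"
    and "S \<noteq> UNIV"
    and "adj S = apery (blowup S) (multiplicity_ns S)"
  shows "finite (dmax_elem S ` S) \<and>
         dmax_ns S = Max (dD S ` maxAp (blowup S) (multiplicity_ns S))"
proof -
  interpret nsg S using assms(1,2) by unfold_locales
  show ?thesis using main assms(3) by blast
qed

end
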